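(* Let $X_1,X_2,\dots$ be i.i.d. with $\mathbf{E}X_1=-a<0$ and $\mathrm{Var}(X_1)<\infty$. Assume $\overline F(x)\sim e^{-g(x)}x^{-2}$ as $x\to\infty$, where $g:(0,\infty)\to\mathbb{R}$ is continuously differentiable, nondecreasing for all sufficiently large $x$, and $x\mapsto g(x)/x$ is nonincreasing on $(0,\infty)$ with $g(x)/x\to0$. Then there exists a constant $C>0$ such that for all integers $n\ge1$, all $x>0$ and all sufficiently large $y$, \[ \mathbf{P}(A_n>x,\ \overline X_n\le y)\le\exp\left\{-\lambda\frac{x}{n}-\lambda\frac{an}{2}+C\lambda^2n\right\},\qquad\text{where }\lambda=\frac{g(y)}{y}. \]
   Context: $S_n=X_1+\dots+X_n$, $\overline F(x)=\mathbf{P}(X_1>x)$, $A_n=\sum_{k=1}^{n}S_k=\sum_{j=1}^n(n-j+1)X_j$, and $\overline X_n=\max(X_1,\dots,X_n)$. *)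

theory Defs
  imports "HOL-Probability.Probability" "HOL-Library.Landau_Symbols"
begin

definition partial_sum :: "(nat \<Rightarrow> 'a \<Rightarrow> real) \<Rightarrow> nat \<Rightarrow> 'a \<Rightarrow> real" where
  "partial_sum X n \<omega> = (\<Sum>j=1..n. X j \<omega>)"

definition sum_partial_sums :: "(nat \<Rightarrow> 'a \<Rightarrow> real) \<Rightarrow> nat \<Rightarrow> 'a \<Rightarrow> real" where
  "sum_partial_sums X n \<omega> = (\<Sum>k=1..n. partial_sum X k \<omega>)"

definition running_max :: "(nat \<Rightarrow> 'a \<Rightarrow> real) \<Rightarrow> nat \<Rightarrow> 'a \<Rightarrow> real" where
  "running_max X n \<omega> = Max ((\<lambda>j. X j \<omega>) ` {1..n})"

end

theory Submission
  imports Defs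
begin


lemma exp_le_quad: fixes s :: real assumes "s \<le> 1" shows "exp s \<le> 1 + s + s\<^sup>2"
proof (cases "s \<ge> 0")
  case True then show ?thesis using exp_bound assms by auto
next
  case False
  define r where "r = -s"
  have r: "r > 0" using False r_def by auto
  have "exp s = 1 / exp r" by (simp add: r_def exp_minus field_simps)
  also have "\<dots> \<le> 1 / (1 + r)" using r exp_ge_add_one_self[of r]
    by (intro divide_left_mono) auto
  also have "\<dots> \<le> 1 - r + r\<^sup>2"
  proof -
    have "1 \<le> (1 - r + r\<^sup>2) * (1 + r)" using r by (simp add: algebra_simps power2_eq_square power3_eq_cube) 
    then show ?thesis using r by (simp add: field_simps)
  qed
  finally show ?thesis by (simp add: r_def)
qed

lemma pointwise_bound:
  fixes t y u :: real
  assumes t: "t \<ge> 0"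
  shows "exp (t*u) * indicator {..y} u \<le> 1 + t*u + (t*u)\<^sup>2
     + (\<Sum>m\<in>{1..nat \<lfloor>t*y\<rfloor>}. exp (real m + 1) * indicator {real m / t<..} u)"
proof -
  have S: "(\<Sum>m\<in>{1..nat \<lfloor>t*y\<rfloor>}. exp (real m + 1) * indicator {real m / t<..} u) \<ge> 0"
    by (intro sum_nonneg) auto
  have Q: "1 + t*u + (t*u)\<^sup>2 \<ge> 0"
  proof -
    have "1 + t*u + (t*u)\<^sup>2 = (t*u + 1/2)\<^sup>2 + 3/4" by (simp add: power2_eq_square algebra_simps)
    moreover have "(t*u + 1/2)\<^sup>2 \<ge> 0" by simp
    ultimately show ?thesis by linarith
  qed
  show ?thesis
  proof (cases "u \<le> y")
    case False then show ?thesis using S Q by simp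
  next
    case uy: True
    show ?thesis
    proof (cases "t*u \<le> 1")
      case True then show ?thesis using uy S exp_le_quad[of "t*u"] by simp
    next
      case False
      have tpos: "t > 0" using False t by (cases "t = 0") auto
      define m where "m = nat (\<lceil>t*u\<rceil> - 1)"
      have m1: "m \<ge> 1" using False unfolding m_def by linarith
      have mlt: "real m < t*u" unfolding m_def using False by linarith
      have mle: "t*u \<le> real m + 1" unfolding m_def using False by linarith
      have "t*u \<le> t*y" using uy t by (simp add: mult_left_mono)
      then have mN: "m \<le> nat \<lfloor>t*y\<rfloor>" using mlt by linarith
      have um: "real m / t < u" using mlt tpos by (simp add: field_simps)
      have "exp (t*u) \<le> exp (real m + 1) * indicator {real m / t<..} u"
        using mle um by simp
      also have "\<dots> \<le> (\<Sum>m\<in>{1..nat \<lfloor>t*y\<rfloor>}. exp (real m + 1) * indicator {real m / t<..} u)"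
        using m1 mN by (intro member_le_sum) auto
      finally show ?thesis using uy Q by simp
    qed
  qed
qed

lemma inv_sq_sum: "(\<Sum>m\<in>{1..N}. 1 / (real m)\<^sup>2) \<le> 2 - 1 / real (max 1 N)"
proof (induction N)
  case 0 then show ?case by simp
next
  case (Suc N)
  show ?case
  proof (cases "N = 0")
    case True then show ?thesis by simp
  next
    case False
    have "(\<Sum>m\<in>{1..Suc N}. 1 / (real m)\<^sup>2) = (\<Sum>m\<in>{1..N}. 1 / (real m)\<^sup>2) + 1 / (real (Suc N))\<^sup>2"
      by simp
    also have "\<dots> \<le> 2 - 1 / real N + 1 / (real (Suc N))\<^sup>2" using Suc False by simp
    also have "\<dots> \<le> 2 - 1 / real (Suc N)"
    proof -
      have "1 / (real (Suc N))\<^sup>2 \<le> 1 / real N - 1 / real (Suc N)"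
      proof -
        have "1 / (real N - 0) - 1 / real (Suc N) = 1 / (real N * real (Suc N))"
          using False by (simp add: field_simps)
        moreover have "1 / (real (Suc N))\<^sup>2 \<le> 1 / (real N * real (Suc N))"
          using False by (intro divide_left_mono) (auto simp: power2_eq_square)
        ultimately show ?thesis by simp
      qed
      then show ?thesis by simp
    qed
    finally show ?thesis by simp
  qed
qed




lemma (in prob_space) mgf_trunc_bound:
  fixes Y :: "'a \<Rightarrow> real" and g :: "real \<Rightarrow> real"
  assumes Ym[measurable]: "Y \<in> borel_measurable M" and Yi: "integrable M Y"
    and Y2: "integrable M (\<lambda>\<omega>. (Y \<omega>)\<^sup>2)"
    and EY: "expectation Y = -a"
    and tailK: "\<And>u. u \<ge> u0 \<Longrightarrow> prob {\<omega>\<in>space M. Y \<omega> > u} \<le> K * exp (- g u) / u\<^sup>2"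
    and u0: "u0 > 0" and K: "K \<ge> 0"
    and anti: "antimono_on {0<..} (\<lambda>x. g x / x)"
    and y: "y > 0" and t: "0 \<le> t" "t \<le> g y / y" "t * u0 \<le> 1"
  shows "expectation (\<lambda>\<omega>. exp (t * Y \<omega>) * indicator {..y} (Y \<omega>))
           \<le> 1 - t*a + (expectation (\<lambda>\<omega>. (Y \<omega>)\<^sup>2) + 2 * exp 1 * K) * t\<^sup>2"
proof -
  define N where "N = nat \<lfloor>t*y\<rfloor>"
  define h where "h m \<omega> = exp (real m + 1) * indicator {\<omega>\<in>space M. real m / t < Y \<omega>} \<omega>" for m \<omega>
  define B where "B \<omega> = 1 + t * Y \<omega> + t\<^sup>2 * (Y \<omega>)\<^sup>2
     + (\<Sum>m\<in>{1..N}. h m \<omega>)" for \<omega>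
  have ind_int: "integrable M (h m)" for m unfolding h_def
    by (intro integrable_mult_right integrable_indicator) (auto simp: emeasure_eq_measure)
  have Bint: "integrable M B" unfolding B_def
  proof (intro Bochner_Integration.integrable_add)
    show "integrable M (\<lambda>\<omega>. \<Sum>m\<in>{1..N}. h m \<omega>)"
      by (intro Bochner_Integration.integrable_sum ind_int)
    show "integrable M (\<lambda>\<omega>. t\<^sup>2 * (Y \<omega>)\<^sup>2)" using Y2 by (rule integrable_mult_right)
    show "integrable M (\<lambda>\<omega>. t * Y \<omega>)" using Yi by (rule integrable_mult_right)
  qed simp
  have fint: "integrable M (\<lambda>\<omega>. exp (t * Y \<omega>) * indicator {..y} (Y \<omega>))"
  proof (rule integrable_const_bound[where B="exp (t*y)"])
    show "AE x in M. norm (exp (t * Y x) * indicator {..y} (Y x)) \<le> exp (t * y)"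
      using t by (auto simp: indicator_def mult_left_mono)
  qed simp
  have "expectation (\<lambda>\<omega>. exp (t * Y \<omega>) * indicator {..y} (Y \<omega>)) \<le> expectation B"
  proof (rule integral_mono[OF fint Bint])
    fix \<omega> assume "\<omega> \<in> space M"
    then show "exp (t * Y \<omega>) * indicator {..y} (Y \<omega>) \<le> B \<omega>"
      using pointwise_bound[OF t(1), of "Y \<omega>" y] unfolding B_def N_def h_def
      by (simp add: indicator_def power_mult_distrib)
  qed
  also have "expectation B = 1 + t * expectation Y + t\<^sup>2 * expectation (\<lambda>\<omega>. (Y \<omega>)\<^sup>2)
     + (\<Sum>m\<in>{1..N}. exp (real m + 1) * prob {\<omega>\<in>space M. real m / t < Y \<omega>})"
  proof -
    have i1: "integrable M (\<lambda>\<omega>. \<Sum>m\<in>{1..N}. h m \<omega>)"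
      by (intro Bochner_Integration.integrable_sum ind_int)
    have i2: "integrable M (\<lambda>\<omega>. t\<^sup>2 * (Y \<omega>)\<^sup>2)" using Y2 by (rule integrable_mult_right)
    have i3: "integrable M (\<lambda>\<omega>. t * Y \<omega>)" using Yi by (rule integrable_mult_right)
    have eh: "expectation (h m) = exp (real m + 1) * prob {\<omega>\<in>space M. real m / t < Y \<omega>}" for m
    proof -
      have "expectation (h m) = exp (real m + 1) * expectation (indicator {\<omega>\<in>space M. real m / t < Y \<omega>})"
        unfolding h_def by (rule integral_mult_right_zero)
      also have "expectation (indicator {\<omega>\<in>space M. real m / t < Y \<omega>}) = prob {\<omega>\<in>space M. real m / t < Y \<omega>}"
        by (simp add: Int_absorb2)
      finally show ?thesis .
    qed
    have i0: "integrable M (\<lambda>\<omega>. 1::real)" by simp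
    have e1: "expectation (\<lambda>\<omega>. \<Sum>m\<in>{1..N}. h m \<omega>)
       = (\<Sum>m\<in>{1..N}. exp (real m + 1) * prob {\<omega>\<in>space M. real m / t < Y \<omega>})"
      by (subst Bochner_Integration.integral_sum[OF ind_int]) (intro sum.cong refl, simp add: eh)
    have "expectation B = expectation (\<lambda>\<omega>. 1 + t * Y \<omega> + t\<^sup>2 * (Y \<omega>)\<^sup>2)
        + expectation (\<lambda>\<omega>. \<Sum>m\<in>{1..N}. h m \<omega>)"
      unfolding B_def using i0 i1 i2 i3 by (intro Bochner_Integration.integral_add) auto
    also have "expectation (\<lambda>\<omega>. 1 + t * Y \<omega> + t\<^sup>2 * (Y \<omega>)\<^sup>2) = 1 + t * expectation Y + t\<^sup>2 * expectation (\<lambda>\<omega>. (Y \<omega>)\<^sup>2)"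
      using i0 i2 i3 Yi Y2 by (simp add: Bochner_Integration.integral_add prob_space)
    finally show ?thesis using e1 by simp
  qed
  also have "(\<Sum>m\<in>{1..N}. exp (real m + 1) * prob {\<omega>\<in>space M. real m / t < Y \<omega>})
      \<le> (\<Sum>m\<in>{1..N}. exp 1 * K * t\<^sup>2 * (1 / (real m)\<^sup>2))"
  proof (rule sum_mono)
    fix m assume m: "m \<in> {1..N}"
    then have m1: "real m \<ge> 1" by auto
    have "real m \<le> t * y"
    proof -
      have "int m \<le> \<lfloor>t*y\<rfloor>" using m unfolding N_def by auto
      then have "real m \<le> real_of_int \<lfloor>t*y\<rfloor>" by linarith
      then show ?thesis using of_int_floor_le[of "t*y"] by linarith
    qed
    then have tpos: "t > 0" using m1 t(1) by (cases "t = 0") auto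
    define v where "v = real m / t"
    have vpos: "v > 0" using tpos m1 by (simp add: v_def)
    have vy: "v \<le> y" using \<open>real m \<le> t * y\<close> tpos by (simp add: v_def field_simps)
    have vu0: "v \<ge> u0"
    proof -
      have "u0 \<le> 1 / t" using t(3) tpos by (simp add: field_simps)
      also have "1 / t \<le> v" using m1 tpos by (simp add: v_def divide_right_mono)
      finally show ?thesis .
    qed
    have "g y / y \<le> g v / v" using anti vpos vy y by (auto simp: monotone_on_def)
    then have "t \<le> g v / v" using t(2) by linarith
    then have gv: "real m \<le> g v" using vpos tpos by (simp add: v_def field_simps)
    have "prob {\<omega>\<in>space M. real m / t < Y \<omega>} \<le> K * exp (- g v) / v\<^sup>2"
      using tailK[OF vu0] by (simp add: v_def)
    also have "\<dots> \<le> K * exp (- real m) / v\<^sup>2"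
      using gv K vpos by (intro divide_right_mono mult_left_mono) auto
    finally have P: "prob {\<omega>\<in>space M. real m / t < Y \<omega>} \<le> K * exp (- real m) / v\<^sup>2" .
    have "exp (real m + 1) * prob {\<omega>\<in>space M. real m / t < Y \<omega>}
        \<le> exp (real m + 1) * (K * exp (- real m) / v\<^sup>2)"
      using P by (intro mult_left_mono) auto
    also have "\<dots> = exp 1 * K * t\<^sup>2 * (1 / (real m)\<^sup>2)"
      using tpos m1 by (simp add: v_def field_simps exp_add exp_minus power2_eq_square)
    finally show "exp (real m + 1) * prob {\<omega>\<in>space M. real m / t < Y \<omega>}
        \<le> exp 1 * K * t\<^sup>2 * (1 / (real m)\<^sup>2)" .
  qed
  also have "(\<Sum>m\<in>{1..N}. exp 1 * K * t\<^sup>2 * (1 / (real m)\<^sup>2)) \<le> exp 1 * K * t\<^sup>2 * 2"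
  proof -
    have "(\<Sum>m\<in>{1..N}. 1 / (real m)\<^sup>2) \<le> 2"
      using inv_sq_sum[of N] by (smt (verit) divide_nonneg_nonneg of_nat_0_le_iff)
    moreover have "(\<Sum>m\<in>{1..N}. exp 1 * K * t\<^sup>2 * (1 / (real m)\<^sup>2)) = exp 1 * K * t\<^sup>2 * (\<Sum>m\<in>{1..N}. 1 / (real m)\<^sup>2)"
      by (rule sum_distrib_left[symmetric])
    ultimately show ?thesis using K by (simp only:) (intro mult_left_mono, auto)
  qed
  finally show ?thesis using EY by (simp add: algebra_simps)
qed




lemma sps_eq: "sum_partial_sums X n \<omega> = (\<Sum>j\<in>{1..n}. real (Suc n - j) * X j \<omega>)"
proof (induction n)
  case 0 then show ?case by (simp add: sum_partial_sums_def)
next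
  case (Suc n)
  have "sum_partial_sums X (Suc n) \<omega> = sum_partial_sums X n \<omega> + partial_sum X (Suc n) \<omega>"
    by (simp add: sum_partial_sums_def)
  also have "\<dots> = (\<Sum>j\<in>{1..n}. real (Suc n - j) * X j \<omega>) + (\<Sum>j\<in>{1..Suc n}. X j \<omega>)"
    using Suc by (simp add: partial_sum_def)
  also have "\<dots> = (\<Sum>j\<in>{1..Suc n}. real (Suc (Suc n) - j) * X j \<omega>)"
  proof -
    have "(\<Sum>j\<in>{1..Suc n}. real (Suc (Suc n) - j) * X j \<omega>)
        = (\<Sum>j\<in>{1..Suc n}. real (Suc n - j) * X j \<omega> + X j \<omega>)"
      by (intro sum.cong refl) (auto simp: Suc_diff_le algebra_simps)
    also have "\<dots> = (\<Sum>j\<in>{1..Suc n}. real (Suc n - j) * X j \<omega>) + (\<Sum>j\<in>{1..Suc n}. X j \<omega>)"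
      by (rule sum.distrib)
    also have "(\<Sum>j\<in>{1..Suc n}. real (Suc n - j) * X j \<omega>) = (\<Sum>j\<in>{1..n}. real (Suc n - j) * X j \<omega>)"
      by (simp add: sum.atLeast1_atMost_eq)
    finally show ?thesis by simp
  qed
  finally show ?case .
qed

lemma rmax_le: "n \<ge> 1 \<Longrightarrow> running_max X n \<omega> \<le> y \<longleftrightarrow> (\<forall>j\<in>{1..n}. X j \<omega> \<le> y)"
  unfolding running_max_def by (subst Max_le_iff) auto

lemma gauss_real: "(\<Sum>i\<in>{1..n}. real i) = real n * (real n + 1) / 2"
  by (induction n) (auto simp: field_simps)

lemma (in prob_space) chernoff_step:
  fixes X :: "nat \<Rightarrow> 'a \<Rightarrow> real"
  assumes meas: "\<And>i. i \<ge> 1 \<Longrightarrow> X i \<in> borel_measurable M"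
    and indep: "indep_vars (\<lambda>_. borel) X {1..}"
    and ident: "\<And>i. i \<ge> 1 \<Longrightarrow> distr M borel (X i) = distr M borel (X 1)"
    and n: "n \<ge> 1" and h: "h \<ge> 0"
  shows "measure M {\<omega> \<in> space M. sum_partial_sums X n \<omega> > x \<and> running_max X n \<omega> \<le> y}
    \<le> exp (- h * x) * (\<Prod>j\<in>{1..n}. expectation (\<lambda>\<omega>. exp (h * real (Suc n - j) * X 1 \<omega>) * indicator {..y} (X 1 \<omega>)))"
proof -
  define X' where "X' j = (if j \<ge> 1 then X j else (\<lambda>_. 0))" for j
  have X'm[measurable]: "X' j \<in> borel_measurable M" for j using meas by (simp add: X'_def)
  have X'eq: "j \<in> {1..n} \<Longrightarrow> X' j = X j" for j by (simp add: X'_def)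
  define c where "c j = h * real (Suc n - j)" for j
  have c0: "c j \<ge> 0" for j using h by (simp add: c_def)
  define \<phi> where "\<phi> j z = exp (c j * z) * indicator {..y} z" for j and z :: real
  have \<phi>m[measurable]: "\<phi> j \<in> borel_measurable borel" for j unfolding \<phi>_def by measurable
  define S where "S = {\<omega> \<in> space M. sum_partial_sums X n \<omega> > x \<and> running_max X n \<omega> \<le> y}"
  have S_eq: "S = {\<omega> \<in> space M. (\<Sum>j\<in>{1..n}. real (Suc n - j) * X' j \<omega>) > x \<and> (\<forall>j\<in>{1..n}. X' j \<omega> \<le> y)}"
    unfolding S_def using n by (auto simp: sps_eq rmax_le X'eq)
  have Ssets: "S \<in> sets M" unfolding S_eq by measurable
  define F where "F \<omega> = (\<Prod>j\<in>{1..n}. \<phi> j (X' j \<omega>))" for \<omega>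
  have indep': "indep_vars (\<lambda>_. borel) (\<lambda>j \<omega>. \<phi> j (X' j \<omega>)) {1..n}"
  proof -
    have "indep_vars (\<lambda>_. borel) X {1..n}" using indep by (rule indep_vars_subset) auto
    then have "indep_vars (\<lambda>_. borel) X' {1..n}"
      by (rule indep_vars_cong[THEN iffD1, rotated 3]) (auto simp: X'eq)
    then show ?thesis by (rule indep_vars_compose2) simp
  qed
  have fint: "integrable M (\<lambda>\<omega>. \<phi> j (X' j \<omega>))" for j
  proof (rule integrable_const_bound[where B="exp (c j * y)"])
    show "AE x in M. norm (\<phi> j (X' j x)) \<le> exp (c j * y)"
      using c0[of j] by (auto simp: \<phi>_def indicator_def mult_left_mono)
  qed simp
  have Fint: "integrable M F" unfolding F_def
    using indep' fint by (intro indep_vars_integrable) auto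
  have "measure M S = expectation (indicator S)"
    using Ssets sets.sets_into_space by (simp add: Int_absorb2)
  also have "\<dots> \<le> expectation (\<lambda>\<omega>. exp (- h * x) * F \<omega>)"
  proof (rule integral_mono)
    show "integrable M (indicator S :: 'a \<Rightarrow> real)" using Ssets by (simp add: emeasure_eq_measure)
    show "integrable M (\<lambda>\<omega>. exp (- h * x) * F \<omega>)" using Fint by simp
    fix \<omega> assume \<omega>: "\<omega> \<in> space M"
    have Fnn: "F \<omega> \<ge> 0" unfolding F_def \<phi>_def by (intro prod_nonneg) auto
    show "indicator S \<omega> \<le> exp (- h * x) * F \<omega>"
    proof (cases "\<omega> \<in> S")
      case False then show ?thesis using Fnn by simp
    next
      case True
      then have A: "(\<Sum>j\<in>{1..n}. real (Suc n - j) * X' j \<omega>) > x" and Y: "\<forall>j\<in>{1..n}. X' j \<omega> \<le> y"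
        unfolding S_eq by auto
      have "F \<omega> = (\<Prod>j\<in>{1..n}. exp (c j * X' j \<omega>))"
        unfolding F_def \<phi>_def using Y by (intro prod.cong refl) auto
      also have "\<dots> = exp (\<Sum>j\<in>{1..n}. c j * X' j \<omega>)" by (simp add: exp_sum)
      also have "(\<Sum>j\<in>{1..n}. c j * X' j \<omega>) = h * (\<Sum>j\<in>{1..n}. real (Suc n - j) * X' j \<omega>)"
        unfolding c_def by (simp add: sum_distrib_left mult.assoc)
      finally have "exp (- h * x) * F \<omega> = exp (h * ((\<Sum>j\<in>{1..n}. real (Suc n - j) * X' j \<omega>) - x))"
        by (simp add: exp_add[symmetric] algebra_simps)
      moreover have "h * ((\<Sum>j\<in>{1..n}. real (Suc n - j) * X' j \<omega>) - x) \<ge> 0" using A h by simp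
      ultimately show ?thesis using True by simp
    qed
  qed
  also have "\<dots> = exp (- h * x) * (\<Prod>j\<in>{1..n}. expectation (\<lambda>\<omega>. \<phi> j (X' j \<omega>)))"
    unfolding F_def using indep' fint by (simp add: indep_vars_lebesgue_integral)
  also have "(\<Prod>j\<in>{1..n}. expectation (\<lambda>\<omega>. \<phi> j (X' j \<omega>)))
      = (\<Prod>j\<in>{1..n}. expectation (\<lambda>\<omega>. exp (h * real (Suc n - j) * X 1 \<omega>) * indicator {..y} (X 1 \<omega>)))"
  proof (intro prod.cong refl)
    fix j assume j: "j \<in> {1..n}"
    have "expectation (\<lambda>\<omega>. \<phi> j (X' j \<omega>)) = integral\<^sup>L (distr M borel (X' j)) (\<phi> j)"
      by (rule integral_distr[symmetric]) auto
    also have "distr M borel (X' j) = distr M borel (X' 1)"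
    proof -
      have e1: "X' j = X j" using j by (simp add: X'_def)
      have e2: "X' 1 = X 1" by (simp add: X'_def)
      show ?thesis unfolding e1 e2 by (rule ident) (use j in auto)
    qed
    also have "integral\<^sup>L (distr M borel (X' 1)) (\<phi> j) = expectation (\<lambda>\<omega>. \<phi> j (X' 1 \<omega>))"
      by (rule integral_distr) auto
    finally show "expectation (\<lambda>\<omega>. \<phi> j (X' j \<omega>))
       = expectation (\<lambda>\<omega>. exp (h * real (Suc n - j) * X 1 \<omega>) * indicator {..y} (X 1 \<omega>))"
      by (simp add: \<phi>_def c_def X'_def)
  qed
  finally show ?thesis unfolding S_def .
qed




lemma g_nonneg:
  fixes g :: "real \<Rightarrow> real"
  assumes mono: "mono_on {x0..} g" and anti: "antimono_on {0<..} (\<lambda>x. g x / x)"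
    and y: "y \<ge> x0" "y > 0"
  shows "g y \<ge> 0"
proof -
  define z where "z = 2*y+1"
  have z: "z > y" "z > 0" using y by (auto simp: z_def)
  have "g y \<le> g z" using mono y z by (auto simp: monotone_on_def)
  moreover have "g z / z \<le> g y / y" using anti y z by (auto simp: monotone_on_def)
  then have "g z \<le> z * (g y / y)" using z by (simp add: field_simps)
  ultimately have "g y \<le> z * (g y / y)" by linarith
  then have "g y * y \<le> z * g y" using y by (simp add: field_simps)
  then have "0 \<le> g y * (z - y)" by (simp add: algebra_simps)
  then show ?thesis using z by (simp add: zero_le_mult_iff)
qed

lemma sum_rev_real: "(\<Sum>j\<in>{1..n}. real (Suc n - j)) = real n * (real n + 1) / 2"
proof -
  have "(\<Sum>j\<in>{1..n}. real j) = (\<Sum>j\<in>{1..n}. real (n + 1 - j))"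
    by (rule sum.atLeastAtMost_rev)
  then show ?thesis using gauss_real[of n] by simp
qed

theorem mainTheorem6:
  fixes M :: "'a measure" and X :: "nat \<Rightarrow> 'a \<Rightarrow> real"
    and a :: real and g :: "real \<Rightarrow> real"
  assumes "prob_space M"
    and meas: "\<And>i. i \<ge> 1 \<Longrightarrow> X i \<in> borel_measurable M"
    and indep: "prob_space.indep_vars M (\<lambda>_. borel) X {1..}"
    and ident: "\<And>i. i \<ge> 1 \<Longrightarrow> distr M borel (X i) = distr M borel (X 1)"
    and "a > 0"
    and "integrable M (X 1)" and "(\<integral>\<omega>. X 1 \<omega> \<partial>M) = - a"
    and "integrable M (\<lambda>\<omega>. (X 1 \<omega>)\<^sup>2)"
    and tail: "(\<lambda>x. measure M {\<omega> \<in> space M. X 1 \<omega> > x}) \<sim>[at_top] (\<lambda>x. exp (- g x) * x powi (-2))"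
    and "g C1_differentiable_on {0<..}"
    and "\<exists>x0. mono_on {x0..} g"
    and "antimono_on {0<..} (\<lambda>x. g x / x)"
    and "((\<lambda>x. g x / x) \<longlongrightarrow> 0) at_top"
  shows "\<exists>C>0. \<forall>\<^sub>F y in at_top. \<forall>n\<ge>1. \<forall>x>0.
           measure M {\<omega> \<in> space M. sum_partial_sums X n \<omega> > x \<and> running_max X n \<omega> \<le> y}
             \<le> exp (- (g y / y) * x / real n - (g y / y) * a * real n / 2 + C * (g y / y)\<^sup>2 * real n)"
proof -
  interpret prob_space M by fact
  note anti = \<open>antimono_on {0<..} (\<lambda>x. g x / x)\<close>
  obtain x0 where mono: "mono_on {x0..} g" using assms(11) by blast
  have a: "a > 0" by fact
  have X1m: "X 1 \<in> borel_measurable M" using meas by simp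
  have "eventually (\<lambda>x. norm (measure M {\<omega> \<in> space M. X 1 \<omega> > x}) \<le> 2 * norm (exp (- g x) * x powi (-2))) at_top"
    by (rule asymp_equiv_imp_eventually_le[OF tail]) simp
  then obtain u1 where u1: "\<And>u. u \<ge> u1 \<Longrightarrow> norm (measure M {\<omega> \<in> space M. X 1 \<omega> > u}) \<le> 2 * norm (exp (- g u) * u powi (-2))"
    by (auto simp: eventually_at_top_linorder)
  define u0 where "u0 = max u1 1"
  have u0: "u0 > 0" by (simp add: u0_def)
  have tailK: "prob {\<omega>\<in>space M. X 1 \<omega> > u} \<le> 2 * exp (- g u) / u\<^sup>2" if "u \<ge> u0" for u
  proof -
    have "u \<ge> u1" "u > 0" using that by (auto simp: u0_def)
    then have "norm (measure M {\<omega> \<in> space M. X 1 \<omega> > u}) \<le> 2 * norm (exp (- g u) * u powi (-2))"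
      using u1 by blast
    moreover have "norm (exp (- g u) * u powi (-2)) = exp (- g u) / u\<^sup>2"
      using \<open>u > 0\<close> by (simp add: power_int_minus divide_inverse)
    moreover have "prob {\<omega>\<in>space M. X 1 \<omega> > u} \<le> norm (prob {\<omega>\<in>space M. X 1 \<omega> > u})" by simp
    ultimately have "prob {\<omega>\<in>space M. X 1 \<omega> > u} \<le> 2 * (exp (- g u) / u\<^sup>2)" by linarith
    then show ?thesis by simp
  qed
  define V where "V = expectation (\<lambda>\<omega>. (X 1 \<omega>)\<^sup>2)"
  have V: "V \<ge> 0" unfolding V_def by (intro integral_nonneg_AE) auto
  define C where "C = V + 2 * exp 1 * 2 + 1"
  have Cpos: "C > 0" using V by (simp add: C_def add_nonneg_pos)
  have ev1: "eventually (\<lambda>y. g y / y < 1 / u0) at_top"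
    using order_tendstoD(2)[OF assms(13)] u0 by simp
  have ev2: "eventually (\<lambda>y. y \<ge> max x0 1) at_top" by (rule eventually_ge_at_top)
  show ?thesis
  proof (intro exI[of _ C] conjI Cpos)
    show "\<forall>\<^sub>F y in at_top. \<forall>n\<ge>1. \<forall>x>0.
           measure M {\<omega> \<in> space M. sum_partial_sums X n \<omega> > x \<and> running_max X n \<omega> \<le> y}
             \<le> exp (- (g y / y) * x / real n - (g y / y) * a * real n / 2 + C * (g y / y)\<^sup>2 * real n)"
      using ev1 ev2
    proof eventually_elim
      case (elim y)
      have y: "y > 0" "y \<ge> x0" using elim(2) by auto
      define l where "l = g y / y"
      have l0: "l \<ge> 0" using g_nonneg[OF mono anti y(2) y(1)] y by (simp add: l_def)
      have lu: "l * u0 \<le> 1" using elim(1) u0 by (simp add: l_def field_simps)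
      show ?case
      proof (intro allI impI)
        fix n :: nat and x :: real
        assume n: "n \<ge> 1" and x: "x > 0"
        define h where "h = l / real n"
        have h0: "h \<ge> 0" using l0 by (simp add: h_def)
        define t where "t j = h * real (Suc n - j)" for j
        have tb: "0 \<le> t j \<and> t j \<le> l" if "j \<in> {1..n}" for j
        proof -
          have "real (Suc n - j) \<le> real n" using that by auto
          then have "h * real (Suc n - j) \<le> h * real n" using h0 by (rule mult_left_mono)
          then show ?thesis using h0 n l0 by (simp add: t_def h_def)
        qed
        define E where "E j = expectation (\<lambda>\<omega>. exp (t j * X 1 \<omega>) * indicator {..y} (X 1 \<omega>))" for j
        have "measure M {\<omega> \<in> space M. sum_partial_sums X n \<omega> > x \<and> running_max X n \<omega> \<le> y}
            \<le> exp (- h * x) * (\<Prod>j\<in>{1..n}. E j)"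
          using chernoff_step[OF meas indep ident n h0, of x y] by (simp add: E_def t_def)
        also have "(\<Prod>j\<in>{1..n}. E j) \<le> (\<Prod>j\<in>{1..n}. exp (- t j * a + C * (t j)\<^sup>2))"
        proof (rule prod_mono)
          fix j assume j: "j \<in> {1..n}"
          have E0: "0 \<le> E j" unfolding E_def by (intro integral_nonneg_AE) (auto simp: indicator_def)
          have "t j * u0 \<le> l * u0" using tb[OF j] u0 by (intro mult_right_mono) auto
          then have tu: "t j * u0 \<le> 1" using lu by linarith
          have "E j \<le> 1 - t j * a + (V + 2 * exp 1 * 2) * (t j)\<^sup>2"
            unfolding E_def V_def
            using mgf_trunc_bound[OF X1m assms(6) assms(8) assms(7) tailK u0 _ anti y(1), where t="t j"]
              tb[OF j] tu by (simp add: l_def)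
          also have "\<dots> \<le> 1 + (- t j * a + C * (t j)\<^sup>2)"
          proof -
            have "(V + 2 * exp 1 * 2) * (t j)\<^sup>2 \<le> C * (t j)\<^sup>2"
              by (intro mult_right_mono) (auto simp: C_def)
            then show ?thesis by simp
          qed
          also have "\<dots> \<le> exp (- t j * a + C * (t j)\<^sup>2)" by (rule exp_ge_add_one_self)
          finally show "0 \<le> E j \<and> E j \<le> exp (- t j * a + C * (t j)\<^sup>2)" using E0 by simp
        qed
        also have "(\<Prod>j\<in>{1..n}. exp (- t j * a + C * (t j)\<^sup>2))
              = exp (\<Sum>j\<in>{1..n}. - t j * a + C * (t j)\<^sup>2)" by (simp add: exp_sum)
        also have "(\<Sum>j\<in>{1..n}. - t j * a + C * (t j)\<^sup>2) \<le> - l * a * real n / 2 + C * l\<^sup>2 * real n"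
        proof -
          have s1: "(\<Sum>j\<in>{1..n}. t j) = h * (real n * (real n + 1) / 2)"
            unfolding t_def sum_distrib_left[symmetric] sum_rev_real ..
          also have "\<dots> = l * (real n + 1) / 2" using n by (simp add: h_def field_simps)
          finally have s1': "(\<Sum>j\<in>{1..n}. t j) = l * (real n + 1) / 2" .
          have s2: "(\<Sum>j\<in>{1..n}. (t j)\<^sup>2) \<le> (\<Sum>j\<in>{1..n}. l\<^sup>2)"
            using tb by (intro sum_mono power_mono) auto
          have "(\<Sum>j\<in>{1..n}. - t j * a + C * (t j)\<^sup>2) = - a * (\<Sum>j\<in>{1..n}. t j) + C * (\<Sum>j\<in>{1..n}. (t j)\<^sup>2)"
            by (simp add: sum.distrib sum_distrib_left sum_negf sum_subtractf mult.commute)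
          also have "\<dots> \<le> - a * (l * (real n + 1) / 2) + C * (real n * l\<^sup>2)"
          proof -
            have "C * (\<Sum>j\<in>{1..n}. (t j)\<^sup>2) \<le> C * (real n * l\<^sup>2)"
              using s2 Cpos by (intro mult_left_mono) auto
            moreover have "a * (\<Sum>j\<in>{1..n}. t j) = a * (l * (real n + 1) / 2)" using s1' by simp
            moreover have "C * (real n * l\<^sup>2) = C * l\<^sup>2 * real n" by simp
            ultimately show ?thesis by linarith
          qed
          also have "\<dots> \<le> - l * a * real n / 2 + C * l\<^sup>2 * real n"
          proof -
            have "0 \<le> a * l" using a l0 by simp
            moreover have "- a * (l * (real n + 1) / 2) = - l * a * real n / 2 - a * l / 2"
              by (simp add: field_simps)
            moreover have "C * (real n * l\<^sup>2) = C * l\<^sup>2 * real n" by simp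
            ultimately show ?thesis by linarith
          qed
          finally show ?thesis .
        qed
        then have "exp (- h * x) * exp (\<Sum>j\<in>{1..n}. - t j * a + C * (t j)\<^sup>2)
             \<le> exp (- h * x) * exp (- l * a * real n / 2 + C * l\<^sup>2 * real n)" by simp
        also have "\<dots> = exp (- l * x / real n - l * a * real n / 2 + C * l\<^sup>2 * real n)"
          by (simp add: exp_add[symmetric] h_def)
        finally show "measure M {\<omega> \<in> space M. sum_partial_sums X n \<omega> > x \<and> running_max X n \<omega> \<le> y}
             \<le> exp (- (g y / y) * x / real n - (g y / y) * a * real n / 2 + C * (g y / y)\<^sup>2 * real n)"
          by (simp add: l_def mult_left_mono)
      qed
    qed
  qed
qed


end
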